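(* The Heisenberg group $\mathrm{UT}_3(\mathbb{Z})$ of upper unitriangular $3\times 3$ integer matrices is not strongly verbally closed.
   Context: A subgroup $H$ of a group $G$ is verbally closed in $G$ if every equation $w(x_1,\dots,x_n)=h$, where $w$ is an element of the free group $F(x_1,\dots,x_n)$ and $h\in H$, that has a solution in $G$ has a solution in $H$. $H$ is algebraically closed in $G$ if every finite system of equations $\{w_1=1,\dots,w_m=1\}$ with $w_i\in H*F(x_1,\dots,x_n)$ that has a solution in $G$ has a solution in $H$. A group $H$ is strongly verbally closed if it is algebraically closed in every group containing $H$ as a verbally closed subgroup. *)

theory Defs
  imports "HOL-Analysis.Finite_Cartesian_Product" "HOL-Algebra.Group"
begin

definition UT3Z :: "(int^3^3) monoid" where
  "UT3Z = \<lparr> carrier = {A :: int^3^3.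
              A$1$1 = 1 \<and> A$2$2 = 1 \<and> A$3$3 = 1 \<and>
              A$2$1 = 0 \<and> A$3$1 = 0 \<and> A$3$2 = 0},
            mult = (\<lambda>A B. A ** B),
            one = mat 1 \<rparr>"

text \<open>Letters of words in G * F(x_0, x_1, ...): a variable x_i or its inverse
  (Var i True = x_i, Var i False = x_i^{-1}), or a constant from the group.
  A word in the free group is a list of letters without constants.\<close>

datatype 'c letter = Var nat bool | Cst 'c

fun evalw :: "('a, 'b) monoid_scheme \<Rightarrow> (nat \<Rightarrow> 'a) \<Rightarrow> 'a letter list \<Rightarrow> 'a" where
  "evalw G f [] = \<one>\<^bsub>G\<^esub>"
| "evalw G f (Var i True # w) = f i \<otimes>\<^bsub>G\<^esub> evalw G f w"
| "evalw G f (Var i False # w) = inv\<^bsub>G\<^esub> (f i) \<otimes>\<^bsub>G\<^esub> evalw G f w"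
| "evalw G f (Cst c # w) = c \<otimes>\<^bsub>G\<^esub> evalw G f w"

definition coeff_free :: "'a letter list \<Rightarrow> bool" where
  "coeff_free w \<longleftrightarrow> (\<forall>c. Cst c \<notin> set w)"

definition coeffs_in :: "'a set \<Rightarrow> 'a letter list \<Rightarrow> bool" where
  "coeffs_in S w \<longleftrightarrow> (\<forall>c. Cst c \<in> set w \<longrightarrow> c \<in> S)"

definition verbally_closed :: "'a set \<Rightarrow> ('a, 'b) monoid_scheme \<Rightarrow> bool" where
  "verbally_closed H G \<longleftrightarrow>
     (\<forall>w h. coeff_free w \<longrightarrow> h \<in> H \<longrightarrow>
        (\<exists>f. (\<forall>i. f i \<in> carrier G) \<and> evalw G f w = h) \<longrightarrow>
        (\<exists>f. (\<forall>i. f i \<in> H) \<and> evalw G f w = h))"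

definition algebraically_closed :: "'a set \<Rightarrow> ('a, 'b) monoid_scheme \<Rightarrow> bool" where
  "algebraically_closed H G \<longleftrightarrow>
     (\<forall>ws. (\<forall>w\<in>set ws. coeffs_in H w) \<longrightarrow>
        (\<exists>f. (\<forall>i. f i \<in> carrier G) \<and> (\<forall>w\<in>set ws. evalw G f w = \<one>\<^bsub>G\<^esub>)) \<longrightarrow>
        (\<exists>f. (\<forall>i. f i \<in> H) \<and> (\<forall>w\<in>set ws. evalw G f w = \<one>\<^bsub>G\<^esub>)))"

end

theory Submission imports Defs "HOL-Number_Theory.Cong" "HOL-Computational_Algebra.Primes"
  "HOL-Analysis.Cartesian_Space" "HOL-Library.Countable"
begin


lemma unit_case:
  fixes n c v m :: int
  assumes cop: "coprime m n"
  shows "\<exists>s k. n dvd s * c + k * v + s * k * m - m"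
proof -
  obtain mi where "[m * mi = 1] (mod n)" using cong_solve_coprime_int[OF cop] by blast
  then obtain t where t: "m * mi = 1 + n * t"
    by (metis cong_iff_lin cong_sym mult.commute)
  define s where "s = (1 - v) * mi"
  define k where "k = (m * m + c * v - c) * mi"
  have "m * s + v = (1-v) * (m * mi) + v" unfolding s_def by (simp add: algebra_simps)
  also have "\<dots> = 1 + n * (t * (1-v))" unfolding t by (simp add: algebra_simps)
  finally have X: "m * s + v = 1 + n * (t * (1-v))" .
  have "m * k + c = (m * m + c * v - c) * (m * mi) + c" unfolding k_def by (simp add: algebra_simps)
  also have "\<dots> = m * m + c * v + n * (t * (m * m+c * v-c))" unfolding t by (simp add: algebra_simps)
  finally have Y: "m * k + c = m * m + c * v + n * (t * (m * m+c * v-c))" .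
  have "m * (s * c + k * v + s * k * m - m) = (m * s+v) * (m * k+c) - v * c - m * m"
    by (simp add: algebra_simps)
  also have "\<dots> = (1 + n * (t * (1-v))) * (m * m + c * v + n * (t * (m * m+c * v-c))) - v * c - m * m"
    using X Y by simp
  also have "\<dots> = n * ((t * (1-v)) * (m * m + c * v) + (t * (m * m+c * v-c)) + n * (t * (1-v)) * (t * (m * m+c * v-c)))"
    by (simp add: algebra_simps)
  finally have "n dvd m * (s * c + k * v + s * k * m - m)" by (metis dvd_triv_left)
  then have "n dvd (s * c + k * v + s * k * m - m)"
    using cop by (metis coprime_commute coprime_dvd_mult_right_iff)
  then show ?thesis by blast
qed

lemma inv_case_c:
  fixes n c v m :: int
  assumes cop: "coprime c n"
  shows "\<exists>s k. n dvd s * c + k * v + s * k * m - m"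
proof -
  obtain ci where "[c * ci = 1] (mod n)" using cong_solve_coprime_int[OF cop] by blast
  then obtain t where t: "c * ci = 1 + n * t"
    by (metis cong_iff_lin cong_sym mult.commute)
  have "(m * ci) * c + 0 * v + (m * ci) * 0 * m - m = m * (c * ci) - m" by (simp add: algebra_simps)
  also have "\<dots> = n * (t * m)" using t by (simp add: algebra_simps)
  finally have "(m * ci) * c + 0 * v + (m * ci) * 0 * m - m = n * (t * m)" .
  then show ?thesis by (metis dvd_triv_left)
qed

lemma inv_case_v:
  fixes n c v m :: int
  assumes cop: "coprime v n"
  shows "\<exists>s k. n dvd s * c + k * v + s * k * m - m"
proof -
  obtain s k where "n dvd s * v + k * c + s * k * m - m" using inv_case_c[OF cop, of c m] by blast
  then have "n dvd k * c + s * v + k * s * m - m" by (simp add: algebra_simps)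
  then show ?thesis by blast
qed

lemma oneD:
  fixes d :: int
  assumes "d > 0"
  shows "\<exists>s k. d dvd s * c + k * v + s * k * m - m"
  using assms
proof (induction "nat d" arbitrary: d c v m rule: less_induct)
  case less
  show ?case
  proof (cases "d = 1")
    case True then show ?thesis by auto
  next
    case False
    then have "d > 1" using less.prems by simp
    then have "\<exists>b. b dvd d \<and> prime b" using prime_divisor_exists[of d] by simp
    then obtain p where p: "prime p" "p dvd d" by blast
    show ?thesis
    proof (cases "p dvd c \<and> p dvd v \<and> p dvd m")
      case True
      then obtain c' v' m' where cvm: "c = p * c'" "v = p * v'" "m = p * m'" by (meson dvdE)
      obtain d' where dd: "d = p * d'" using p by (meson dvdE)
      have pp: "p > 1" using p prime_gt_1_int by blast
      have d'pos: "d' > 0" using less.prems dd pp by (simp add: zero_less_mult_iff)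
      have "nat d' < nat d" using dd pp d'pos by (simp add: nat_less_eq_zless)
      with less.hyps[OF this d'pos] obtain s k where "d' dvd s * c' + k * v' + s * k * m' - m'" by blast
      then have "p * d' dvd p * (s * c' + k * v' + s * k * m' - m')" by simp
      moreover have "p * (s * c' + k * v' + s * k * m' - m') = s * c + k * v + s * k * m - m"
        using cvm by (simp add: algebra_simps)
      ultimately show ?thesis using dd by metis
    next
      case nd: False
      have dnz: "d \<noteq> 0" using less.prems by simp
      have pnu: "\<not> is_unit p" using p not_prime_unit by blast
      define a where "a = multiplicity p d"
      obtain d' where dec0: "d = p ^ multiplicity p d * d'" "\<not> p dvd d'"
        using multiplicity_decompose'[OF dnz pnu] by metis
      have dec: "d = p^a * d'" using dec0(1) unfolding a_def .
      have pp: "p > 1" using p prime_gt_1_int by blast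
      have "\<bar>p\<bar> \<noteq> 1" using pp by simp
      then have "0 < multiplicity p d" using multiplicity_gt_zero_iff[of d p] dnz p(2) by simp
      then have a1: "a \<ge> 1" unfolding a_def by simp
      have pa: "p ^ a > 1" using pp a1 by (simp add: one_less_power)
      have d'pos: "d' > 0" using dec less.prems pa
        by (metis less_trans zero_less_mult_pos zero_less_one)
      have cop: "coprime (p^a) d'" using dec0(2) p
        by (simp add: prime_imp_coprime coprime_power_left_iff)
      have lt: "nat d' < nat d" using dec pa d'pos
        by (simp add: nat_less_eq_zless)
      obtain s2 k2 where s2: "d' dvd s2 * c + k2 * v + s2 * k2 * m - m"
        using less.hyps[OF lt d'pos] by blast
      have "\<exists>s k. p^a dvd s * c + k * v + s * k * m - m"
      proof -
        have copx: "coprime x (p^a)" if "\<not> p dvd x" for x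
          using that p by (simp add: prime_imp_coprime coprime_commute coprime_power_right_iff)
        show ?thesis
        proof (cases "p dvd m")
          case False then show ?thesis using unit_case copx by blast
        next
          case pm: True
          show ?thesis
          proof (cases "p dvd c")
            case False then show ?thesis using inv_case_c copx by blast
          next
            case True
            then have "\<not> p dvd v" using nd pm by blast
            then show ?thesis using inv_case_v copx by blast
          qed
        qed
      qed
      then obtain s1 k1 where s1: "p^a dvd s1 * c + k1 * v + s1 * k1 * m - m" by blast
      obtain s where s: "[s = s1] (mod p^a)" "[s = s2] (mod d')"
        using binary_chinese_remainder_int[OF cop] by blast
      obtain k where k: "[k = k1] (mod p^a)" "[k = k2] (mod d')"
        using binary_chinese_remainder_int[OF cop] by blast
      have "[s * c + k * v + s * k * m - m = s1 * c + k1 * v + s1 * k1 * m - m] (mod p^a)"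
        using s k by (intro cong_diff cong_add cong_mult cong_refl) auto
      then have A: "p^a dvd s * c + k * v + s * k * m - m"
        using s1 by (metis cong_dvd_iff)
      have "[s * c + k * v + s * k * m - m = s2 * c + k2 * v + s2 * k2 * m - m] (mod d')"
        using s k by (intro cong_diff cong_add cong_mult cong_refl) auto
      then have B: "d' dvd s * c + k * v + s * k * m - m"
        using s2 by (metis cong_dvd_iff)
      have "p^a * d' dvd s * c + k * v + s * k * m - m"
        using A B cop by (simp add: divides_mult)
      then show ?thesis unfolding dec by blast
    qed
  qed
qed


datatype c5 = C (p1: int) (p2: int) (p3: int) (p4: int) (p5: int)

definition mulc :: "c5 \<Rightarrow> c5 \<Rightarrow> c5" where
  "mulc x y = C (p1 x + p1 y) (p2 x + p2 y) (p3 x + p3 y) (p4 x + p4 y)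
                (p5 x + p5 y + p1 x * p2 y + p3 x * p4 y)"
definition invc :: "c5 \<Rightarrow> c5" where
  "invc x = C (- p1 x) (- p2 x) (- p3 x) (- p4 x) (- p5 x + p1 x * p2 x + p3 x * p4 x)"
definition onec :: c5 where "onec = C 0 0 0 0 0"

definition enc :: "c5 \<Rightarrow> nat" where
  "enc x = to_nat (p1 x, p2 x, p3 x, p4 x, p5 x)"
definition dec :: "nat \<Rightarrow> c5" where
  "dec n = (case from_nat n of (a, b, c, d, e) \<Rightarrow> C a b c d e)"

lemma dec_enc [simp]: "dec (enc x) = x"
  unfolding enc_def dec_def by (cases x) simp

lemma enc_eq_iff [simp]: "enc x = enc y \<longleftrightarrow> x = y"
  by (metis dec_enc)

definition GG :: "nat monoid" where
  "GG = \<lparr>carrier = range enc, monoid.mult = (\<lambda>x y. enc (mulc (dec x) (dec y))), monoid.one = enc onec\<rparr>"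

lemma GG_carrier [simp]: "carrier GG = range enc" by (simp add: GG_def)
lemma GG_mult [simp]: "enc x \<otimes>\<^bsub>GG\<^esub> enc y = enc (mulc x y)" by (simp add: GG_def)
lemma GG_one [simp]: "\<one>\<^bsub>GG\<^esub> = enc onec" by (simp add: GG_def)

lemma enc_in [simp]: "enc x \<in> carrier GG" by simp

lemma carrier_enc: "x \<in> carrier GG \<Longrightarrow> enc (dec x) = x" by auto

lemma group_GG: "group GG"
proof (rule groupI)
  fix x y assume "x \<in> carrier GG" "y \<in> carrier GG"
  then show "x \<otimes>\<^bsub>GG\<^esub> y \<in> carrier GG" by (auto simp: GG_def)
next
  show "\<one>\<^bsub>GG\<^esub> \<in> carrier GG" by simp
next
  fix x y z assume "x \<in> carrier GG" "y \<in> carrier GG" "z \<in> carrier GG"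
  then show "x \<otimes>\<^bsub>GG\<^esub> y \<otimes>\<^bsub>GG\<^esub> z = x \<otimes>\<^bsub>GG\<^esub> (y \<otimes>\<^bsub>GG\<^esub> z)"
    by (auto simp: mulc_def algebra_simps)
next
  fix x assume "x \<in> carrier GG"
  then show "\<one>\<^bsub>GG\<^esub> \<otimes>\<^bsub>GG\<^esub> x = x" by (auto simp: mulc_def onec_def)
next
  fix x assume "x \<in> carrier GG"
  then obtain a where a: "x = enc a" by auto
  have "enc (invc a) \<otimes>\<^bsub>GG\<^esub> x = \<one>\<^bsub>GG\<^esub>"
    unfolding a by (simp add: mulc_def invc_def onec_def)
  then show "\<exists>y\<in>carrier GG. y \<otimes>\<^bsub>GG\<^esub> x = \<one>\<^bsub>GG\<^esub>"
    using enc_in[of "invc a"] by blast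
qed

lemma GG_inv [simp]: "inv\<^bsub>GG\<^esub> (enc x) = enc (invc x)"
  by (rule group.inv_equality[OF group_GG]) (simp_all add: mulc_def invc_def onec_def)

fun evc :: "(nat \<Rightarrow> c5) \<Rightarrow> nat letter list \<Rightarrow> c5" where
  "evc g [] = onec"
| "evc g (Var i True # w) = mulc (g i) (evc g w)"
| "evc g (Var i False # w) = mulc (invc (g i)) (evc g w)"
| "evc g (Cst c # w) = mulc (dec c) (evc g w)"

lemma evalw_GG:
  assumes "\<forall>i. f i \<in> carrier GG" "\<forall>c. Cst c \<in> set w \<longrightarrow> c \<in> carrier GG"
  shows "evalw GG f w = enc (evc (\<lambda>i. dec (f i)) w)"
  using assms
proof (induction w)
  case Nil then show ?case by simp
next
  case (Cons l w)
  then have IH: "evalw GG f w = enc (evc (\<lambda>i. dec (f i)) w)" by auto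
  show ?case
  proof (cases l)
    case (Var i b)
    have "f i \<in> carrier GG" using Cons.prems(1) by blast
    then have fi: "f i = enc (dec (f i))" by (simp add: carrier_enc)
    show ?thesis using IH Var
      by (cases b) (simp_all, metis GG_mult fi, metis GG_mult GG_inv fi)
  next
    case (Cst c)
    then have "c = enc (dec c)" using Cons.prems by auto
    then show ?thesis using IH Cst by (metis GG_mult evalw.simps(4) evc.simps(4))
  qed
qed

fun E :: "nat letter list \<Rightarrow> (nat \<Rightarrow> int) \<Rightarrow> int" where
  "E [] x = 0"
| "E (Var i True # w) x = x i + E w x"
| "E (Var i False # w) x = - x i + E w x"
| "E (Cst c # w) x = E w x"

fun Q :: "nat letter list \<Rightarrow> (nat \<Rightarrow> int) \<Rightarrow> (nat \<Rightarrow> int) \<Rightarrow> int" where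
  "Q [] a b = 0"
| "Q (Var i True # w) a b = a i * E w b + Q w a b"
| "Q (Var i False # w) a b = a i * b i - a i * E w b + Q w a b"
| "Q (Cst c # w) a b = Q w a b"

lemma E_lin: "E w (\<lambda>i. s * x i + t * y i) = s * E w x + t * E w y"
  by (induction w x rule: E.induct) (auto simp: algebra_simps)

lemma Q_lin1: "Q w (\<lambda>i. s * a i + t * a' i) b = s * Q w a b + t * Q w a' b"
  by (induction w a b rule: Q.induct) (auto simp: algebra_simps)

lemma Q_lin2: "Q w a (\<lambda>i. s * b i + t * b' i) = s * Q w a b + t * Q w a b'"
  by (induction w a b rule: Q.induct) (auto simp: algebra_simps E_lin)

lemma E_zero [simp]: "E w (\<lambda>i. 0) = 0"
  using E_lin[of w 0 "\<lambda>i. 0" 0 "\<lambda>i. 0"] by simp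

lemma Q_zero [simp]: "Q w (\<lambda>i. 0) b = 0"
  using Q_lin1[of w 0 "\<lambda>i. 0" 0 "\<lambda>i. 0" b] by simp

lemma evc_formula:
  assumes "coeff_free w"
  shows "evc g w = C (E w (\<lambda>i. p1 (g i))) (E w (\<lambda>i. p2 (g i))) (E w (\<lambda>i. p3 (g i)))
     (E w (\<lambda>i. p4 (g i)))
     (E w (\<lambda>i. p5 (g i)) + Q w (\<lambda>i. p1 (g i)) (\<lambda>i. p2 (g i)) + Q w (\<lambda>i. p3 (g i)) (\<lambda>i. p4 (g i)))"
  using assms
proof (induction w)
  case Nil then show ?case by (simp add: onec_def)
next
  case (Cons l w)
  then have cf: "coeff_free w" by (simp add: coeff_free_def)
  show ?case
  proof (cases l)
    case (Var i b)
    then show ?thesis using Cons.IH[OF cf]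
      by (cases b) (simp_all add: mulc_def invc_def algebra_simps)
  next
    case (Cst c)
    then have False using Cons.prems unfolding coeff_free_def by (metis list.set_intros(1))
    then show ?thesis ..
  qed
qed


lemma bilin_ideal:
  fixes B :: "(nat \<Rightarrow> int) \<Rightarrow> (nat \<Rightarrow> int) \<Rightarrow> int"
  assumes l1: "\<And>s t a a' b. B (\<lambda>i. s * a i + t * a' i) b = s * B a b + t * B a' b"
    and l2: "\<And>s t a b b'. B a (\<lambda>i. s * b i + t * b' i) = s * B a b + t * B a b'"
  shows "\<exists>a'' b''. B a'' b'' = B a b + B a' b'"
proof (cases "\<forall>x y. B x y = 0")
  case True then show ?thesis by auto
next
  case False
  then obtain x0 y0 where nz: "B x0 y0 \<noteq> 0" by blast
  have neg: "B (\<lambda>i. (-1) * x0 i + 0 * x0 i) y0 = - B x0 y0" using l1[of "-1" x0 0 x0 y0] by simp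
  define P where "P = (\<lambda>n::nat. n > 0 \<and> (\<exists>x y. B x y = int n))"
  have exP: "\<exists>n. P n"
  proof (cases "B x0 y0 > 0")
    case True then show ?thesis unfolding P_def
      by (intro exI[of _ "nat (B x0 y0)"]) auto
  next
    case False
    then have "B (\<lambda>i. (-1) * x0 i + 0 * x0 i) y0 > 0" using neg nz by simp
    then show ?thesis unfolding P_def
      by (intro exI[of _ "nat (B (\<lambda>i. (-1) * x0 i + 0 * x0 i) y0)"]) auto
  qed
  define m where "m = (LEAST n. P n)"
  have Pm: "P m" unfolding m_def using exP by (metis LeastI_ex)
  have minm: "\<And>n. P n \<Longrightarrow> m \<le> n" unfolding m_def by (rule Least_le)
  have mpos: "m > 0" using Pm P_def by simp
  obtain a0 b0 where ab0: "B a0 b0 = int m" using Pm P_def by blast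
  have K1: "int m dvd B a1 b" if h: "B a1 b1 = int m" for a1 b1 b
  proof -
    define y where "y = B a1 b"
    define q where "q = y div int m"
    have "B a1 (\<lambda>i. 1 * b i + (-q) * b1 i) = y - q * int m" using l2[of a1 1 b "-q" b1] h y_def by simp
    also have "\<dots> = y mod int m" by (simp add: q_def minus_div_mult_eq_mod)
    finally have r: "B a1 (\<lambda>i. 1 * b i + (-q) * b1 i) = y mod int m" .
    have r0: "y mod int m \<ge> 0" "y mod int m < int m" using mpos by simp_all
    have "y mod int m = 0"
    proof (rule ccontr)
      assume "y mod int m \<noteq> 0"
      then have "P (nat (y mod int m))" unfolding P_def using r r0 by auto
      then have "m \<le> nat (y mod int m)" by (rule minm)
      then show False using r0 by linarith
    qed
    then show ?thesis unfolding y_def by (simp add: dvd_eq_mod_eq_0)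
  qed
  have K2: "int m dvd B a b1" if h: "B a1 b1 = int m" for a1 b1 a
  proof -
    define y where "y = B a b1"
    define q where "q = y div int m"
    have "B (\<lambda>i. 1 * a i + (-q) * a1 i) b1 = y - q * int m" using l1[of 1 a "-q" a1 b1] h y_def by simp
    also have "\<dots> = y mod int m" by (simp add: q_def minus_div_mult_eq_mod)
    finally have r: "B (\<lambda>i. 1 * a i + (-q) * a1 i) b1 = y mod int m" .
    have r0: "y mod int m \<ge> 0" "y mod int m < int m" using mpos by simp_all
    have "y mod int m = 0"
    proof (rule ccontr)
      assume "y mod int m \<noteq> 0"
      then have "P (nat (y mod int m))" unfolding P_def using r r0 by auto
      then have "m \<le> nat (y mod int m)" by (rule minm)
      then show False using r0 by linarith
    qed
    then show ?thesis unfolding y_def by (simp add: dvd_eq_mod_eq_0)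
  qed
  have K3: "int m dvd B a b" for a b
  proof -
    obtain t where t: "B a b0 = int m * t" using K2[OF ab0, of a] by (auto elim: dvdE)
    define a1 where "a1 = (\<lambda>i. (1 - t) * a0 i + 1 * a i)"
    have "B a1 b0 = (1 - t) * int m + int m * t" unfolding a1_def using l1[of "1-t" a0 1 a b0] ab0 t by simp
    then have "B a1 b0 = int m" by (simp add: algebra_simps)
    then have "int m dvd B a1 b" by (rule K1)
    moreover have "B a1 b = (1 - t) * B a0 b + B a b" unfolding a1_def using l1[of "1-t" a0 1 a b] by simp
    moreover have "int m dvd (1 - t) * B a0 b" using K1[OF ab0, of b] by simp
    ultimately show ?thesis by (metis add_diff_cancel_left' dvd_diff)
  qed
  obtain u where u: "B a b + B a' b' = int m * u"
    using K3[of a b] K3[of a' b'] by (metis dvd_add dvdE)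
  have "B (\<lambda>i. u * a0 i + 0 * a0 i) b0 = B a b + B a' b'" using l1[of u a0 0 a0 b0] ab0 u by simp
  then show ?thesis by blast
qed

lemma coord_vc:
  assumes h1: "E w a = P1" and h2: "E w b = P2" and h3: "E w a' = 0" and h4: "E w b' = 0"
    and h5: "E w z + Q w a b + Q w a' b' = r"
  shows "\<exists>a'' b'' z''. E w a'' = P1 \<and> E w b'' = P2 \<and> E w z'' + Q w a'' b'' = r"
proof (cases "\<forall>x. E w x = 0")
  case True
  obtain a'' b'' where "Q w a'' b'' = Q w a b + Q w a' b'"
    using bilin_ideal[of "Q w", OF Q_lin1 Q_lin2] by blast
  then show ?thesis using True h1 h2 h5
    by (intro exI[of _ a''] exI[of _ b''] exI[of _ z]) auto
next
  case False
  then obtain x0 where nz: "E w x0 \<noteq> 0" by blast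
  have neg: "E w (\<lambda>i. (-1) * x0 i + 0 * x0 i) = - E w x0" using E_lin[of w "-1" x0 0 x0] by simp
  define P where "P = (\<lambda>n::nat. n > 0 \<and> (\<exists>x. E w x = int n))"
  have exP: "\<exists>n. P n"
  proof (cases "E w x0 > 0")
    case True then show ?thesis unfolding P_def
      by (intro exI[of _ "nat (E w x0)"]) auto
  next
    case False
    then have "E w (\<lambda>i. (-1) * x0 i + 0 * x0 i) > 0" using neg nz by simp
    then show ?thesis unfolding P_def
      by (intro exI[of _ "nat (E w (\<lambda>i. (-1) * x0 i + 0 * x0 i))"]) auto
  qed
  define d where "d = (LEAST n. P n)"
  have Pd: "P d" unfolding d_def using exP by (metis LeastI_ex)
  have mind: "\<And>n. P n \<Longrightarrow> d \<le> n" unfolding d_def by (rule Least_le)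
  have dpos: "d > 0" using Pd P_def by simp
  obtain g0 where g0: "E w g0 = int d" using Pd P_def by blast
  have Ddvd: "int d dvd E w x" for x
  proof -
    define y where "y = E w x"
    define q where "q = y div int d"
    have "E w (\<lambda>i. 1 * x i + (-q) * g0 i) = y - q * int d" using E_lin[of w 1 x "-q" g0] g0 y_def by simp
    also have "\<dots> = y mod int d" by (simp add: q_def minus_div_mult_eq_mod)
    finally have r: "E w (\<lambda>i. 1 * x i + (-q) * g0 i) = y mod int d" .
    have r0: "y mod int d \<ge> 0" "y mod int d < int d" using dpos by simp_all
    have "y mod int d = 0"
    proof (rule ccontr)
      assume "y mod int d \<noteq> 0"
      then have "P (nat (y mod int d))" unfolding P_def using r r0 by auto
      then have "d \<le> nat (y mod int d)" by (rule mind)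
      then show False using r0 by linarith
    qed
    then show ?thesis unfolding y_def by (simp add: dvd_eq_mod_eq_0)
  qed
  obtain s k where sk: "int d dvd s * Q w a' b + k * Q w a b' + s * k * Q w a' b' - Q w a' b'"
    using oneD[of "int d" "Q w a' b" "Q w a b'" "Q w a' b'"] dpos by auto
  define a'' where "a'' = (\<lambda>i. 1 * a i + s * a' i)"
  define b'' where "b'' = (\<lambda>i. 1 * b i + k * b' i)"
  have Ea: "E w a'' = P1" unfolding a''_def using E_lin[of w 1 a s a'] h1 h3 by simp
  have Eb: "E w b'' = P2" unfolding b''_def using E_lin[of w 1 b k b'] h2 h4 by simp
  have q1: "Q w a'' b'' = Q w a b'' + s * Q w a' b''"
    unfolding a''_def using Q_lin1[of w 1 a s a' b''] by simp
  have q2: "Q w a b'' = Q w a b + k * Q w a b'"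
    unfolding b''_def using Q_lin2[of w a 1 b k b'] by simp
  have q3: "Q w a' b'' = Q w a' b + k * Q w a' b'"
    unfolding b''_def using Q_lin2[of w a' 1 b k b'] by simp
  have Qab: "Q w a'' b'' = Q w a b + k * Q w a b' + s * Q w a' b + s * k * Q w a' b'"
    using q1 q2 q3 by (simp add: algebra_simps)
  have "int d dvd E w z - (s * Q w a' b + k * Q w a b' + s * k * Q w a' b' - Q w a' b')"
    using Ddvd[of z] sk by (rule dvd_diff)
  then obtain t where t: "E w z - (s * Q w a' b + k * Q w a b' + s * k * Q w a' b' - Q w a' b') = int d * t"
    by (auto elim: dvdE)
  define z'' where "z'' = (\<lambda>i. t * g0 i + 0 * g0 i)"
  have "E w z'' = int d * t" unfolding z''_def using E_lin[of w t g0 0 g0] g0 by (simp add: algebra_simps)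
  then have "E w z'' + Q w a'' b'' = r" using Qab t h5 by (simp add: algebra_simps)
  then show ?thesis using Ea Eb by blast
qed


definition phi :: "int^3^3 \<Rightarrow> nat" where
  "phi A = enc (C (A$1$2) (A$2$3) 0 0 (A$1$3))"

lemma UT3Z_carrier: "A \<in> carrier UT3Z \<longleftrightarrow> A$1$1 = 1 \<and> A$2$2 = 1 \<and> A$3$3 = 1 \<and>
              A$2$1 = 0 \<and> A$3$1 = 0 \<and> A$3$2 = 0"
  by (simp add: UT3Z_def)

lemma UT3Z_mult: "A \<otimes>\<^bsub>UT3Z\<^esub> B = A ** B"
  by (simp add: UT3Z_def)

lemma mm_entry: "(A ** B) $ i $ j = A$i$1 * B$1$j + A$i$2 * B$2$j + A$i$3 * B$3$j"
  for A B :: "int^3^3"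
  by (simp add: matrix_matrix_mult_def sum_3)

lemma phi_hom: "phi \<in> hom UT3Z GG"
proof (rule homI)
  fix A assume "A \<in> carrier UT3Z" then show "phi A \<in> carrier GG" by (simp add: phi_def)
next
  fix A B assume A: "A \<in> carrier UT3Z" and B: "B \<in> carrier UT3Z"
  show "phi (A \<otimes>\<^bsub>UT3Z\<^esub> B) = phi A \<otimes>\<^bsub>GG\<^esub> phi B"
    using A B unfolding UT3Z_carrier UT3Z_mult phi_def
    by (simp add: mm_entry mulc_def algebra_simps)
qed

lemma phi_inj: "inj_on phi (carrier UT3Z)"
proof (rule inj_onI)
  fix A B assume A: "A \<in> carrier UT3Z" and B: "B \<in> carrier UT3Z" and e: "phi A = phi B"
  from e have e': "A$1$2 = B$1$2" "A$2$3 = B$2$3" "A$1$3 = B$1$3" by (simp_all add: phi_def)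
  show "A = B"
    unfolding vec_eq_iff
  proof (intro allI)
    fix i j :: 3
    show "A $ i $ j = B $ i $ j"
      using A B e' exhaust_3[of i] exhaust_3[of j] unfolding UT3Z_carrier by auto
  qed
qed

definition M3 :: "int \<Rightarrow> int \<Rightarrow> int \<Rightarrow> int^3^3" where
  "M3 a b z = vector [vector [1, a, z], vector [0, 1, b], vector [0, 0, 1]]"

lemma M3_in: "M3 a b z \<in> carrier UT3Z"
  unfolding UT3Z_carrier M3_def by simp

lemma phi_M3: "phi (M3 a b z) = enc (C a b 0 0 z)"
  unfolding phi_def M3_def by simp

lemma image_phi: "x \<in> phi ` carrier UT3Z \<longleftrightarrow> (\<exists>a b z. x = enc (C a b 0 0 z))"
proof
  assume "x \<in> phi ` carrier UT3Z" then show "\<exists>a b z. x = enc (C a b 0 0 z)"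
    by (auto simp: phi_def)
next
  assume "\<exists>a b z. x = enc (C a b 0 0 z)"
  then obtain a b z where "x = enc (C a b 0 0 z)" by blast
  then have "x = phi (M3 a b z)" by (simp add: phi_M3)
  then show "x \<in> phi ` carrier UT3Z" using M3_in by blast
qed

lemma vc: "verbally_closed (phi ` carrier UT3Z) GG"
  unfolding verbally_closed_def
proof (intro allI impI)
  fix w :: "nat letter list" and h
  assume cf: "coeff_free w" and hH: "h \<in> phi ` carrier UT3Z"
    and ex: "\<exists>f. (\<forall>i. f i \<in> carrier GG) \<and> evalw GG f w = h"
  obtain P1 P2 r where h: "h = enc (C P1 P2 0 0 r)" using hH image_phi by blast
  obtain f where f: "\<forall>i. f i \<in> carrier GG" "evalw GG f w = h" using ex by blast
  have nc: "\<forall>c. Cst c \<in> set w \<longrightarrow> c \<in> carrier GG" using cf by (simp add: coeff_free_def)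
  define g where "g = (\<lambda>i. dec (f i))"
  have "enc (evc g w) = h" using evalw_GG[OF f(1) nc] f(2) g_def by simp
  then have "evc g w = C P1 P2 0 0 r" using h by simp
  then have eqs: "E w (\<lambda>i. p1 (g i)) = P1" "E w (\<lambda>i. p2 (g i)) = P2"
    "E w (\<lambda>i. p3 (g i)) = 0" "E w (\<lambda>i. p4 (g i)) = 0"
    "E w (\<lambda>i. p5 (g i)) + Q w (\<lambda>i. p1 (g i)) (\<lambda>i. p2 (g i)) + Q w (\<lambda>i. p3 (g i)) (\<lambda>i. p4 (g i)) = r"
    using evc_formula[OF cf, of g] by simp_all
  obtain a'' b'' z'' where sol: "E w a'' = P1" "E w b'' = P2" "E w z'' + Q w a'' b'' = r"
    using coord_vc[OF eqs] by blast
  define f'' where "f'' = (\<lambda>i. enc (C (a'' i) (b'' i) 0 0 (z'' i)))"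
  have f''H: "\<forall>i. f'' i \<in> phi ` carrier UT3Z" unfolding f''_def image_phi by blast
  have f''G: "\<forall>i. f'' i \<in> carrier GG" unfolding f''_def by simp
  have "evalw GG f'' w = enc (evc (\<lambda>i. dec (f'' i)) w)" using evalw_GG[OF f''G nc] .
  also have "evc (\<lambda>i. dec (f'' i)) w = C P1 P2 0 0 r"
    using evc_formula[OF cf, of "\<lambda>i. dec (f'' i)"] sol unfolding f''_def by simp
  finally have "evalw GG f'' w = h" using h by simp
  then show "\<exists>f. (\<forall>i. f i \<in> phi ` carrier UT3Z) \<and> evalw GG f w = h" using f''H by blast
qed


definition "Aa = enc (C 1 0 0 0 0)"
definition "Ai = enc (C (-1) 0 0 0 0)"
definition "Bb = enc (C 0 1 0 0 0)"
definition "Bi = enc (C 0 (-1) 0 0 0)"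
definition "Ci = enc (C 0 0 0 0 (-1))"

definition comm :: "nat \<Rightarrow> nat \<Rightarrow> nat \<Rightarrow> nat letter list" where
  "comm i X Xi = [Var i True, Cst X, Var i False, Cst Xi]"
definition w1 :: "nat letter list" where
  "w1 = [Var 0 True, Var 1 True, Var 0 False, Var 1 False, Cst Ci]"
definition wsys :: "nat letter list list" where
  "wsys = [w1, comm 0 Aa Ai, comm 0 Bb Bi, comm 1 Aa Ai, comm 1 Bb Bi]"

lemma consts_in: "\<forall>w\<in>set wsys. \<forall>c. Cst c \<in> set w \<longrightarrow> c \<in> carrier GG"
  unfolding wsys_def w1_def comm_def Aa_def Ai_def Bb_def Bi_def Ci_def by auto

lemma coeffs_ok: "\<forall>w\<in>set wsys. coeffs_in (phi ` carrier UT3Z) w"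
  unfolding wsys_def w1_def comm_def coeffs_in_def Aa_def Ai_def Bb_def Bi_def Ci_def image_phi
  by auto

definition f0 :: "nat \<Rightarrow> nat" where
  "f0 i = (if i = 0 then enc (C 0 0 1 0 0) else if i = 1 then enc (C 0 0 0 1 0) else enc onec)"

lemma f0_G: "\<forall>i. f0 i \<in> carrier GG" unfolding f0_def by simp

lemma f0_sol: "\<forall>w\<in>set wsys. evalw GG f0 w = \<one>\<^bsub>GG\<^esub>"
proof
  fix w assume w: "w \<in> set wsys"
  have nc: "\<forall>c. Cst c \<in> set w \<longrightarrow> c \<in> carrier GG" using consts_in w by blast
  have "evc (\<lambda>i. dec (f0 i)) w = onec"
    using w unfolding wsys_def w1_def comm_def Aa_def Ai_def Bb_def Bi_def Ci_def f0_def
    by (auto simp: mulc_def invc_def onec_def)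
  then show "evalw GG f0 w = \<one>\<^bsub>GG\<^esub>" using evalw_GG[OF f0_G nc] by simp
qed

lemma no_H_sol:
  assumes fH: "\<forall>i. f i \<in> phi ` carrier UT3Z"
    and sol: "\<forall>w\<in>set wsys. evalw GG f w = \<one>\<^bsub>GG\<^esub>"
  shows False
proof -
  have fG: "\<forall>i. f i \<in> carrier GG" using fH by (auto simp: phi_def)
  define g where "g = (\<lambda>i. dec (f i))"
  have g34: "p3 (g i) = 0" "p4 (g i) = 0" for i
    using fH image_phi[of "f i"] unfolding g_def by auto
  have ev: "evc g w = onec" if "w \<in> set wsys" for w
  proof -
    have nc: "\<forall>c. Cst c \<in> set w \<longrightarrow> c \<in> carrier GG" using consts_in that by blast
    have "enc (evc g w) = enc onec" using evalw_GG[OF fG nc] sol that g_def by simp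
    then show ?thesis by simp
  qed
  have "evc g (comm 0 Aa Ai) = onec" by (rule ev) (simp add: wsys_def)
  then have b0: "p2 (g 0) = 0"
    unfolding comm_def Aa_def Ai_def by (simp add: mulc_def invc_def onec_def g34)
  have "evc g (comm 0 Bb Bi) = onec" by (rule ev) (simp add: wsys_def)
  then have a0: "p1 (g 0) = 0"
    unfolding comm_def Bb_def Bi_def by (simp add: mulc_def invc_def onec_def g34)
  have "evc g (comm 1 Aa Ai) = onec" by (rule ev) (simp add: wsys_def)
  then have b1: "p2 (g 1) = 0"
    unfolding comm_def Aa_def Ai_def by (simp add: mulc_def invc_def onec_def g34)
  have "evc g (comm 1 Bb Bi) = onec" by (rule ev) (simp add: wsys_def)
  then have a1: "p1 (g 1) = 0"
    unfolding comm_def Bb_def Bi_def by (simp add: mulc_def invc_def onec_def g34)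
  have "evc g w1 = onec" by (rule ev) (simp add: wsys_def)
  then show False
    unfolding w1_def Ci_def by (simp add: mulc_def invc_def onec_def g34 a0 a1 b0 b1)
qed

lemma not_ac: "\<not> algebraically_closed (phi ` carrier UT3Z) GG"
  unfolding algebraically_closed_def
  using coeffs_ok f0_G f0_sol no_H_sol by blast

theorem mainTheorem2:
  shows "\<exists>(G :: nat monoid) \<phi>. group G \<and> \<phi> \<in> hom UT3Z G \<and> inj_on \<phi> (carrier UT3Z) \<and>
           verbally_closed (\<phi> ` carrier UT3Z) G \<and>
           \<not> algebraically_closed (\<phi> ` carrier UT3Z) G"
  using group_GG phi_hom phi_inj vc not_ac by blast


end
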